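(* Let $g\in\mathcal{G}_0^\infty$ be differentiable on $(0,1)$ and satisfy $\limsup_{x\to0^+}x g'(x)/g(x)<1$. Then for every $\gamma\ge0$ there exists a process $(X,\Sigma,\mu,T,\mathcal{P})$ such that $h(g,\mathcal{P})=\gamma$. Here $T$ is a measure-preserving automorphism of a probability space $(X,\Sigma,\mu)$ and $\mathcal{P}$ is a finite measurable partition.
   Context: $\mathcal{G}_0$ is the set of concave functions $g:[0,1]\to\mathbb{R}$ with $g(0)=\lim_{x\to0^+}g(x)=0$. Let $\eta(x)=-x\log x$ and $\eta(0)=0$. Define $\mathcal{G}_0^\infty=\{g\in\mathcal{G}_0:\lim_{x\to0^+}g(x)/\eta(x)=\infty\}$. For a finite measurable partition $\mathcal{P}$, let $\mathcal{P}_n=\bigvee_{i=0}^{n-1}T^{-i}\mathcal{P}$, $H(g,\mathcal{P})=\sum_{A\in\mathcal{P}}g(\mu(A))$, and $h(g,\mathcal{P})=\limsup_{n\to\infty}\frac1nH(g,\mathcal{P}_n)$. *)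

theory Defs
  imports "HOL-Probability.Probability"
begin

definition eta :: "real \<Rightarrow> real" where
  "eta x = (if x = 0 then 0 else - x * ln x)"

definition G0 :: "(real \<Rightarrow> real) set" where
  "G0 = {g. concave_on {0..1} g \<and> g 0 = 0 \<and> (g \<longlongrightarrow> 0) (at_right 0)}"

definition G0_inf :: "(real \<Rightarrow> real) set" where
  "G0_inf = {g \<in> G0. filterlim (\<lambda>x. g x / eta x) at_top (at_right 0)}"

definition measure_preserving_map :: "'a measure \<Rightarrow> ('a \<Rightarrow> 'a) \<Rightarrow> bool" where
  "measure_preserving_map M T \<longleftrightarrow>
     T \<in> M \<rightarrow>\<^sub>M M \<and> (\<forall>A \<in> sets M. measure M (T -` A \<inter> space M) = measure M A)"

definition mp_automorphism :: "'a measure \<Rightarrow> ('a \<Rightarrow> 'a) \<Rightarrow> bool" where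
  "mp_automorphism M T \<longleftrightarrow>
     bij_betw T (space M) (space M) \<and> measure_preserving_map M T \<and>
     measure_preserving_map M (the_inv_into (space M) T)"

definition finite_meas_partition :: "'a measure \<Rightarrow> 'a set set \<Rightarrow> bool" where
  "finite_meas_partition M P \<longleftrightarrow>
     finite P \<and> P \<subseteq> sets M \<and> disjoint P \<and> \<Union>P = space M"

definition iter_join :: "'a measure \<Rightarrow> ('a \<Rightarrow> 'a) \<Rightarrow> 'a set set \<Rightarrow> nat \<Rightarrow> 'a set set" where
  "iter_join M T P n =
     {(\<Inter>i<n. (T ^^ i) -` (A i)) \<inter> space M | A. \<forall>i<n. A i \<in> P}"

definition H_g :: "(real \<Rightarrow> real) \<Rightarrow> 'a measure \<Rightarrow> 'a set set \<Rightarrow> real" where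
  "H_g g M P = (\<Sum>A\<in>P. g (measure M A))"

definition h_g :: "(real \<Rightarrow> real) \<Rightarrow> 'a measure \<Rightarrow> ('a \<Rightarrow> 'a) \<Rightarrow> 'a set set \<Rightarrow> ereal" where
  "h_g g M T P = limsup (\<lambda>n. ereal (H_g g M (iter_join M T P n) / real n))"

end

theory Submission
  imports Defs "HOL-Probability.Product_PMF"
begin


definition shift :: "(int \<Rightarrow> nat) \<Rightarrow> (int \<Rightarrow> nat)" where
  "shift \<omega> = (\<lambda>i. \<omega> (i + 1))"
definition ext :: "nat \<Rightarrow> (nat \<Rightarrow> nat) \<Rightarrow> int \<Rightarrow> nat" where
  "ext m y = (\<lambda>i. y (nat (i mod int m)))"
definition PD :: "nat \<Rightarrow> (nat \<Rightarrow> nat) set" where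
  "PD m = PiE_dflt {..<m} 0 (\<lambda>_. {0,1})"
definition Per :: "nat \<Rightarrow> (int \<Rightarrow> nat) set" where
  "Per m = ext m ` PD m"
definition nu :: "nat \<Rightarrow> (int \<Rightarrow> nat) pmf" where
  "nu m = pmf_of_set (Per m)"
definition cyl :: "nat \<Rightarrow> (nat \<Rightarrow> bool) \<Rightarrow> (int \<Rightarrow> nat) set" where
  "cyl t b = {\<omega>. \<forall>i<t. (\<omega> (int i) = 0) = b i}"

lemma finite_PD: "finite (PD m)" unfolding PD_def by auto
lemma card_PD: "card (PD m) = 2^m" unfolding PD_def by (subst card_PiE_dflt) (auto simp: numeral_2_eq_2)
lemma PD_ne: "PD m \<noteq> {}" unfolding PD_def by simp

lemma ext_int: "i < m \<Longrightarrow> ext m y (int i) = y i"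
  unfolding ext_def by simp

lemma inj_ext: "inj_on (ext m) (PD m)"
proof (rule inj_onI)
  fix x y assume x: "x \<in> PD m" and y: "y \<in> PD m" and e: "ext m x = ext m y"
  show "x = y"
  proof
    fix j show "x j = y j"
    proof (cases "j < m")
      case True
      then show ?thesis using e ext_int[of j m x] ext_int[of j m y] by metis
    next
      case False
      then show ?thesis using x y by (auto simp: PD_def PiE_dflt_def)
    qed
  qed
qed

lemma finite_Per: "finite (Per m)" unfolding Per_def using finite_PD by auto
lemma card_Per: "card (Per m) = 2^m" unfolding Per_def using inj_ext card_PD by (simp add: card_image)
lemma Per_ne: "Per m \<noteq> {}" unfolding Per_def using PD_ne by auto

definition rot :: "nat \<Rightarrow> nat \<Rightarrow> nat" where
  "rot m j = (if j < m then (j + 1) mod m else j)"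

lemma shift_ext: 
  assumes "m > 0"
  shows "shift (ext m y) = ext m (y \<circ> rot m)"
proof
  fix i
  have "nat ((i+1) mod int m) = (nat (i mod int m) + 1) mod m"
  proof -
    have a: "0 \<le> i mod int m" "i mod int m < int m" using assms by auto
    have "(i+1) mod int m = (i mod int m + 1) mod int m" by (simp add: mod_add_left_eq)
    also have "\<dots> = int ((nat (i mod int m) + 1) mod m)" using a by (simp add: of_nat_mod add.commute)
    finally show ?thesis by simp
  qed
  moreover have "nat (i mod int m) < m" using assms by (simp add: nat_less_iff)
  ultimately show "shift (ext m y) i = ext m (y \<circ> rot m) i"
    by (simp add: shift_def ext_def rot_def)
qed

lemma rot_PD: assumes "m > 0" "y \<in> PD m" shows "y \<circ> rot m \<in> PD m"
  using assms by (auto simp: PD_def PiE_dflt_def rot_def)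

lemma shift_Per_sub: assumes "m > 0" shows "shift ` Per m \<subseteq> Per m"
  using assms shift_ext rot_PD unfolding Per_def by auto

lemma inj_shift: "inj shift"
proof (rule injI)
  fix x y assume "shift x = shift y"
  then have "\<forall>i. x (i+1) = y (i+1)" by (metis shift_def)
  then show "x = y" by (metis diff_add_cancel ext)
qed

lemma shift_Per: assumes "m > 0" shows "shift ` Per m = Per m"
  by (rule card_subset_eq[OF finite_Per shift_Per_sub[OF assms]])
     (simp add: card_image inj_on_subset[OF inj_shift])

lemma map_shift_nu: assumes "m > 0" shows "map_pmf shift (nu m) = nu m"
  unfolding nu_def by (subst map_pmf_of_set_inj) (auto simp: shift_Per[OF assms] Per_ne finite_Per intro: inj_on_subset[OF inj_shift])



lemma nu_Pi: "nu m = map_pmf (ext m) (Pi_pmf {..<m} 0 (\<lambda>_. pmf_of_set {0,1}))"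
proof -
  have "Pi_pmf {..<m} 0 (\<lambda>_. pmf_of_set {0,1::nat}) = pmf_of_set (PD m)"
    unfolding PD_def by (rule Pi_pmf_of_set) auto
  then show ?thesis unfolding nu_def Per_def
    by (simp add: map_pmf_of_set_inj inj_ext PD_ne finite_PD)
qed

lemma coin_half: "measure (pmf_of_set {0,1::nat}) {v. (v = 0) = c} = 1/2"
  by (cases c) (auto simp: measure_pmf_of_set)

lemma nu_cyl:
  assumes "t \<le> m"
  shows "measure (nu m) (cyl t b) = 1 / 2^t"
proof -
  define B where "B = (\<lambda>i. if i < t then {v::nat. (v = 0) = b i} else UNIV)"
  have pre: "ext m -` cyl t b = Pi {..<m} B"
    using assms by (auto simp: cyl_def B_def ext_int Pi_def)
  have "measure (nu m) (cyl t b) = measure (Pi_pmf {..<m} 0 (\<lambda>_. pmf_of_set {0,1})) (Pi {..<m} B)"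
    by (simp add: nu_Pi pre)
  also have "\<dots> = (\<Prod>i\<in>{..<m}. measure (pmf_of_set {0,1::nat}) (B i))"
    by (rule measure_Pi_pmf_Pi) simp
  also have "\<dots> = (\<Prod>i\<in>{..<m}. (if i < t then 1/2 else 1))"
  proof (rule prod.cong)
    fix i assume "i \<in> {..<m}"
    then show "measure (pmf_of_set {0,1::nat}) (B i) = (if i < t then 1/2 else 1)"
      using coin_half[of "b i"] by (auto simp: B_def)
  qed simp
  also have "\<dots> = (\<Prod>i\<in>{..<t}. (1/2::real))"
  proof -
    have "(\<Prod>i\<in>{..<m}. (if i < t then 1/2 else 1::real)) = (\<Prod>i\<in>{..<t}. (if i < t then 1/2 else 1))"
      using assms by (intro prod.mono_neutral_right) auto
    then show ?thesis by simp
  qed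
  also have "\<dots> = 1 / 2^t" by (simp add: power_one_over)
  finally show ?thesis .
qed

lemma cyl_mono: "s \<le> t \<Longrightarrow> cyl t b \<subseteq> cyl s b"
  unfolding cyl_def by auto

lemma nu_cyl_le:
  assumes "m \<le> t"
  shows "measure (nu m) (cyl t b) \<le> 1 / 2^m"
proof -
  have "measure (nu m) (cyl t b) \<le> measure (nu m) (cyl m b)"
    by (rule measure_pmf.finite_measure_mono[OF cyl_mono[OF assms]]) simp
  then show ?thesis using nu_cyl[of m m b] by simp
qed

lemma nu_cyl_le': "measure (nu m) (cyl t b) \<le> 1 / 2^(min t m)"
  by (cases "t \<le> m") (auto simp: nu_cyl nu_cyl_le min_def)

lemma Per_cyl_card:
  assumes "m \<le> t"
  shows "card (Per m \<inter> cyl t b) \<le> 1"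
proof -
  have "\<forall>x\<in>Per m \<inter> cyl t b. \<forall>y\<in>Per m \<inter> cyl t b. x = y"
  proof (intro ballI)
    fix x y assume x: "x \<in> Per m \<inter> cyl t b" and y: "y \<in> Per m \<inter> cyl t b"
    then obtain u v where u: "u \<in> PD m" "x = ext m u" and v: "v \<in> PD m" "y = ext m v"
      by (auto simp: Per_def)
    have "u = v"
    proof
      fix j show "u j = v j"
      proof (cases "j < m")
        case True
        have "u j \<in> {0,1}" "v j \<in> {0,1}" using u v True by (auto simp: PD_def PiE_dflt_def)
        moreover have "(x (int j) = 0) = b j" "(y (int j) = 0) = b j"
          using x y True assms by (auto simp: cyl_def)
        moreover have "x (int j) = u j" "y (int j) = v j" using u v True by (auto simp: ext_int)
        ultimately show ?thesis by auto
      next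
        case False
        then show ?thesis using u v by (auto simp: PD_def PiE_dflt_def)
      qed
    qed
    then show "x = y" using u v by simp
  qed
  then show ?thesis
    by (metis card_le_Suc0_iff_eq finite_Int finite_Per One_nat_def)
qed

definition Bs :: "nat \<Rightarrow> (nat \<Rightarrow> bool) set" where
  "Bs t = PiE {..<t} (\<lambda>_. UNIV)"

lemma finite_Bs: "finite (Bs t)" unfolding Bs_def by (auto intro: finite_PiE)
lemma card_Bs: "card (Bs t) = 2^t" unfolding Bs_def by (subst card_PiE) auto

lemma cyl_disj:
  assumes "b \<in> Bs t" "b' \<in> Bs t" "b \<noteq> b'"
  shows "cyl t b \<inter> cyl t b' = {}"
proof -
  obtain i where i: "i < t" "b i \<noteq> b' i"
    using assms by (auto simp: Bs_def PiE_def extensional_def fun_eq_iff)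
  then show ?thesis by (auto simp: cyl_def)
qed

definition wit :: "nat \<Rightarrow> (nat \<Rightarrow> bool) \<Rightarrow> int \<Rightarrow> nat" where
  "wit t b = (\<lambda>j. if b (nat j) then 0 else 1)"

lemma wit_cyl: "wit t b \<in> cyl t b" by (auto simp: wit_def cyl_def)

lemma cyl_cover: "\<omega> \<in> cyl t (restrict (\<lambda>i. \<omega> (int i) = 0) {..<t})" 
  by (auto simp: cyl_def)

lemma restrict_Bs: "restrict f {..<t} \<in> Bs t" by (auto simp: Bs_def)

lemma inj_cyl: "inj_on (cyl t) (Bs t)"
proof (rule inj_onI)
  fix b b' assume "b \<in> Bs t" "b' \<in> Bs t" "cyl t b = cyl t b'"
  then show "b = b'" using cyl_disj wit_cyl by blast
qed



lemma measure_bind_pmf_int: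
  "measure (measure_pmf (bind_pmf q F)) A = (\<integral>k. measure (measure_pmf (F k)) A \<partial>measure_pmf q)"
proof -
  have int: "integrable (measure_pmf q) (\<lambda>k. measure (measure_pmf (F k)) A)"
    by (rule measure_pmf.integrable_const_bound[where B=1]) auto
  have "emeasure (measure_pmf (bind_pmf q F)) A = (\<integral>\<^sup>+k. ennreal (measure (measure_pmf (F k)) A) \<partial>measure_pmf q)"
    unfolding emeasure_bind_pmf by (simp add: measure_pmf.emeasure_eq_measure)
  also have "\<dots> = ennreal (\<integral>k. measure (measure_pmf (F k)) A \<partial>measure_pmf q)"
    by (rule nn_integral_eq_integral[OF int]) auto
  finally show ?thesis
    by (simp add: measure_pmf.emeasure_eq_measure integral_nonneg_AE)
qed

lemma funpow_shift: "(shift ^^ i) \<omega> = (\<lambda>j. \<omega> (j + int i))"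
  by (induction i arbitrary: \<omega>) (auto simp: shift_def algebra_simps)

definition Z0 :: "(int \<Rightarrow> nat) set" where "Z0 = {\<omega>. \<omega> 0 = 0}"
definition PP :: "(int \<Rightarrow> nat) set set" where "PP = {Z0, - Z0}"

lemma iter_join_cyl: "iter_join (measure_pmf p) shift PP t = cyl t ` Bs t"
proof (intro equalityI subsetI)
  fix S assume "S \<in> iter_join (measure_pmf p) shift PP t"
  then obtain A where A: "\<forall>i<t. A i \<in> PP" and S: "S = (\<Inter>i<t. (shift ^^ i) -` (A i)) \<inter> UNIV"
    by (auto simp: iter_join_def)
  define b where "b = restrict (\<lambda>i. A i = Z0) {..<t}"
  have "S = cyl t b"
  proof -
    have "\<forall>i<t. (shift ^^ i) -` (A i) = {\<omega>. (\<omega> (int i) = 0) = b i}"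
      using A by (auto simp: PP_def Z0_def b_def funpow_shift)
    then show ?thesis unfolding S cyl_def by auto
  qed
  then show "S \<in> cyl t ` Bs t" using restrict_Bs b_def by auto
next
  fix S assume "S \<in> cyl t ` Bs t"
  then obtain b where b: "S = cyl t b" by auto
  define A where "A = (\<lambda>i. if b i then Z0 else - Z0)"
  have "\<forall>i<t. (shift ^^ i) -` (A i) = {\<omega>. (\<omega> (int i) = 0) = b i}"
    by (auto simp: A_def Z0_def funpow_shift)
  then have "S = (\<Inter>i<t. (shift ^^ i) -` (A i)) \<inter> space (measure_pmf p)"
    unfolding b cyl_def by auto
  moreover have "\<forall>i<t. A i \<in> PP" by (auto simp: A_def PP_def)
  ultimately show "S \<in> iter_join (measure_pmf p) shift PP t"
    unfolding iter_join_def by blast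
qed

lemma H_cyl: "H_g g (measure_pmf p) (iter_join (measure_pmf p) shift PP t) =
    (\<Sum>b\<in>Bs t. g (measure (measure_pmf p) (cyl t b)))"
  unfolding H_g_def iter_join_cyl by (rule sum.reindex[OF inj_cyl, unfolded comp_def])

lemma partition_PP: "finite_meas_partition (measure_pmf p) PP"
  unfolding finite_meas_partition_def PP_def disjoint_def by auto

lemma shift_inv: "the_inv_into UNIV shift = (\<lambda>\<omega> i. \<omega> (i - 1))"
proof
  fix \<omega> show "the_inv_into UNIV shift \<omega> = (\<lambda>i. \<omega> (i - 1))"
    by (rule the_inv_into_f_eq[OF inj_shift]) (auto simp: shift_def)
qed

lemma mp_shift:
  assumes "map_pmf shift p = p"
  shows "mp_automorphism (measure_pmf p) shift"
proof -
  have bij: "bij shift"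
  proof -
    have "surj shift"
    proof
      show "UNIV \<subseteq> range shift"
      proof
        fix \<omega> :: "int \<Rightarrow> nat"
        have "\<omega> = shift (\<lambda>i. \<omega> (i - 1))" by (simp add: shift_def)
        then show "\<omega> \<in> range shift" by blast
      qed
    qed simp
    then show ?thesis using inj_shift by (simp add: bij_def)
  qed
  define S where "S = (\<lambda>(\<omega>::int\<Rightarrow>nat) i. \<omega> (i - 1))"
  have ST: "S \<circ> shift = id" by (auto simp: S_def shift_def fun_eq_iff)
  have pS: "map_pmf S p = p"
  proof -
    have "map_pmf S p = map_pmf S (map_pmf shift p)" using assms by simp
    also have "\<dots> = p" by (simp add: pmf.map_comp ST)
    finally show ?thesis .
  qed
  have mp1: "measure_preserving_map (measure_pmf p) shift"
    unfolding measure_preserving_map_def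
  proof (intro conjI ballI)
    fix A
    have "measure (measure_pmf p) (shift -` A) = measure (measure_pmf (map_pmf shift p)) A" by simp
    then show "measure (measure_pmf p) (shift -` A \<inter> space (measure_pmf p)) = measure (measure_pmf p) A"
      using assms by simp
  qed simp
  have mp2: "measure_preserving_map (measure_pmf p) S"
    unfolding measure_preserving_map_def
  proof (intro conjI ballI)
    fix A
    have "measure (measure_pmf p) (S -` A) = measure (measure_pmf (map_pmf S p)) A" by simp
    then show "measure (measure_pmf p) (S -` A \<inter> space (measure_pmf p)) = measure (measure_pmf p) A"
      using pS by simp
  qed simp
  show ?thesis unfolding mp_automorphism_def using bij mp1 mp2 shift_inv S_def by simp
qed



definition mix :: "(nat \<Rightarrow> nat) \<Rightarrow> nat pmf \<Rightarrow> (int \<Rightarrow> nat) pmf" where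
  "mix m q = bind_pmf q (\<lambda>k. nu (m k))"

lemma mix_shift: assumes "\<And>k. m k > 0" shows "map_pmf shift (mix m q) = mix m q"
  unfolding mix_def map_bind_pmf using map_shift_nu[OF assms] by simp

lemma mix_cyl_decomp:
  assumes sm: "strict_mono m"
  shows "measure (measure_pmf (mix m q)) (cyl t b) =
    measure (measure_pmf q) {k. t \<le> m k} / 2^t +
    (\<Sum>k\<in>{k. m k < t}. pmf q k * measure (measure_pmf (nu (m k))) (cyl t b))"
proof -
  define f where "f k = measure (measure_pmf (nu (m k))) (cyl t b)" for k
  define S where "S = {k. t \<le> m k}"
  have fin: "finite {k. m k < t}"
  proof (rule finite_subset[of _ "{..<t}"])
    show "{k. m k < t} \<subseteq> {..<t}" using seq_suble[OF sm] by (auto intro: le_less_trans)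
  qed simp
  have fe: "f k = indicator S k * (1/2^t) + (if m k < t then f k else 0)" for k
    by (auto simp: f_def S_def nu_cyl indicator_def)
  have i1: "integrable (measure_pmf q) (\<lambda>k. indicator S k * (1/2^t::real))"
    by (rule measure_pmf.integrable_const_bound[where B=1]) (auto simp: indicator_def)
  have i2: "integrable (measure_pmf q) (\<lambda>k. if m k < t then f k else 0)"
    by (rule measure_pmf.integrable_const_bound[where B=1]) (auto simp: f_def)
  have "measure (measure_pmf (mix m q)) (cyl t b) = (\<integral>k. f k \<partial>measure_pmf q)"
    unfolding mix_def f_def by (rule measure_bind_pmf_int)
  also have "\<dots> = (\<integral>k. indicator S k * (1/2^t) + (if m k < t then f k else 0) \<partial>measure_pmf q)"
    using fe by simp
  also have "\<dots> = (\<integral>k. indicator S k * (1/2^t) \<partial>measure_pmf q) + (\<integral>k. (if m k < t then f k else 0) \<partial>measure_pmf q)"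
    by (rule Bochner_Integration.integral_add[OF i1 i2])
  also have "(\<integral>k. indicator S k * (1/2^t::real) \<partial>measure_pmf q) = measure (measure_pmf q) S / 2^t"
    by simp
  also have "(\<integral>k. (if m k < t then f k else 0) \<partial>measure_pmf q) = (\<Sum>k\<in>{k. m k < t}. pmf q k *\<^sub>R (if m k < t then f k else 0))"
    by (rule integral_measure_pmf[OF fin]) (auto split: if_splits)
  also have "\<dots> = (\<Sum>k\<in>{k. m k < t}. pmf q k * f k)"
    by (rule sum.cong) auto
  finally show ?thesis by (simp add: S_def f_def)
qed

lemma mix_cyl_lower:
  assumes sm: "strict_mono m"
  shows "measure (measure_pmf q) {k. t \<le> m k} / 2^t \<le> measure (measure_pmf (mix m q)) (cyl t b)"
  unfolding mix_cyl_decomp[OF sm] by (auto intro!: sum_nonneg)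

lemma mix_cyl_upper:
  assumes sm: "strict_mono m"
  shows "measure (measure_pmf (mix m q)) (cyl t b) \<le> 1 / 2^(min t (m 0))"
proof -
  have "measure (measure_pmf (mix m q)) (cyl t b) = (\<integral>k. measure (measure_pmf (nu (m k))) (cyl t b) \<partial>measure_pmf q)"
    unfolding mix_def by (rule measure_bind_pmf_int)
  also have "\<dots> \<le> (\<integral>k. 1 / 2^(min t (m 0)) \<partial>measure_pmf q)"
  proof (rule integral_mono)
    show "integrable (measure_pmf q) (\<lambda>k. measure (measure_pmf (nu (m k))) (cyl t b))"
      by (rule measure_pmf.integrable_const_bound[where B=1]) auto
    fix k
    have "m 0 \<le> m k" using sm by (simp add: strict_mono_less_eq)
    then have "min t (m 0) \<le> min t (m k)" by simp
    then have "1 / 2^(min t (m k)) \<le> (1 / 2^(min t (m 0))::real)"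
      by (simp add: frac_le)
    then show "measure (measure_pmf (nu (m k))) (cyl t b) \<le> 1 / 2^(min t (m 0))"
      using nu_cyl_le'[of "m k" t b] by linarith
  qed simp
  finally show ?thesis by simp
qed



lemma subadd_sum:
  fixes g :: "real \<Rightarrow> real"
  assumes sub: "\<And>x y. 0 \<le> x \<Longrightarrow> 0 \<le> y \<Longrightarrow> x + y \<le> e \<Longrightarrow> g (x + y) \<le> g x + g y"
  shows "finite F \<Longrightarrow> (\<forall>k\<in>F. 0 \<le> x k) \<Longrightarrow> 0 \<le> a \<Longrightarrow> a + sum x F \<le> e \<Longrightarrow>
     g (a + sum x F) \<le> g a + (\<Sum>k\<in>F. g (x k))"
proof (induction F rule: finite_induct)
  case empty then show ?case by simp
next
  case (insert j F)
  have s0: "0 \<le> sum x F" using insert by (auto intro: sum_nonneg)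
  have "g (a + sum x (insert j F)) = g (x j + (a + sum x F))"
    using insert by (simp add: algebra_simps)
  also have "\<dots> \<le> g (x j) + g (a + sum x F)"
    using insert s0 by (intro sub) (auto simp: algebra_simps)
  also have "g (a + sum x F) \<le> g a + (\<Sum>k\<in>F. g (x k))"
    using insert s0 by (intro insert.IH) auto
  finally show ?case using insert by (simp add: algebra_simps)
qed

locale gsetup =
  fixes g :: "real \<Rightarrow> real" and e :: real and m :: "nat \<Rightarrow> nat" and q :: "nat pmf"
  assumes mono: "\<And>x y. 0 \<le> x \<Longrightarrow> x \<le> y \<Longrightarrow> y \<le> e \<Longrightarrow> g x \<le> g y"
    and g0: "g 0 = 0"
    and sub: "\<And>x y. 0 \<le> x \<Longrightarrow> 0 \<le> y \<Longrightarrow> x + y \<le> e \<Longrightarrow> g (x + y) \<le> g x + g y"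
    and sm: "strict_mono m"
    and m0: "1 / 2^(m 0) \<le> e"
begin

abbreviation "p \<equiv> mix m q"
definition W :: "nat \<Rightarrow> real" where "W t = measure (measure_pmf q) {k. t \<le> m k}"

lemma gnn: "0 \<le> x \<Longrightarrow> x \<le> e \<Longrightarrow> 0 \<le> g x"
  using mono[of 0 x] g0 by simp

lemma cyl_le_e: "m 0 \<le> t \<Longrightarrow> measure (measure_pmf p) (cyl t b) \<le> e"
proof -
  assume "m 0 \<le> t"
  then have "min t (m 0) = m 0" by simp
  then show ?thesis using mix_cyl_upper[OF sm, of q t b] m0 by simp
qed

lemma W_le: "W t / 2^t \<le> measure (measure_pmf p) (cyl t b)"
  unfolding W_def by (rule mix_cyl_lower[OF sm])

lemma H_lower:
  assumes "m 0 \<le> t"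
  shows "2^t * g (W t / 2^t) \<le> (\<Sum>b\<in>Bs t. g (measure (measure_pmf p) (cyl t b)))"
proof -
  have "(\<Sum>b\<in>Bs t. g (W t / 2^t)) \<le> (\<Sum>b\<in>Bs t. g (measure (measure_pmf p) (cyl t b)))"
  proof (rule sum_mono)
    fix b show "g (W t / 2^t) \<le> g (measure (measure_pmf p) (cyl t b))"
      using W_le[of t b] cyl_le_e[OF assms, of b] by (intro mono) (auto simp: W_def)
  qed
  then show ?thesis by (simp add: card_Bs)
qed

lemma short_family:
  assumes "m k < t" and w: "0 \<le> w" "w \<le> 1"
  shows "(\<Sum>b\<in>Bs t. g (w * measure (measure_pmf (nu (m k))) (cyl t b))) \<le> 2^(m k) * g (w / 2^(m k))"
proof -
  define c where "c b = card (Per (m k) \<inter> cyl t b)" for b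
  have c1: "c b \<le> 1" for b unfolding c_def by (rule Per_cyl_card) (use assms in auto)
  have ge: "0 \<le> g (w / 2^(m k))"
  proof (rule gnn)
    have "w / 2^(m k) \<le> 1 / 2^(m k)" using w by (simp add: divide_right_mono)
    also have "\<dots> \<le> 1 / 2^(m 0)" using sm by (simp add: frac_le strict_mono_less_eq)
    finally show "w / 2^(m k) \<le> e" using m0 by simp
  qed (use w in simp)
  have eq: "g (w * measure (measure_pmf (nu (m k))) (cyl t b)) = real (c b) * g (w / 2^(m k))" for b
  proof -
    have "measure (measure_pmf (nu (m k))) (cyl t b) = real (c b) / 2^(m k)"
      unfolding nu_def c_def by (subst measure_pmf_of_set) (auto simp: Per_ne finite_Per card_Per)
    moreover have "c b = 0 \<or> c b = 1" using c1[of b] by auto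
    ultimately show ?thesis using g0 by auto
  qed
  have "(\<Sum>b\<in>Bs t. real (c b)) = real (card (\<Union>b\<in>Bs t. Per (m k) \<inter> cyl t b))"
    unfolding c_def
    by (subst card_UN_disjoint) (auto simp: finite_Bs finite_Per dest: cyl_disj)
  also have "\<dots> \<le> real (card (Per (m k)))"
    by (intro of_nat_mono card_mono finite_Per) auto
  finally have cs: "(\<Sum>b\<in>Bs t. real (c b)) \<le> 2^(m k)" by (simp add: card_Per)
  have "(\<Sum>b\<in>Bs t. g (w * measure (measure_pmf (nu (m k))) (cyl t b))) = (\<Sum>b\<in>Bs t. real (c b)) * g (w / 2^(m k))"
    by (simp add: eq sum_distrib_right)
  also have "\<dots> \<le> 2^(m k) * g (w / 2^(m k))"
    by (rule mult_right_mono[OF cs ge])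
  finally show ?thesis .
qed

lemma H_upper:
  assumes "m 0 \<le> t"
  shows "(\<Sum>b\<in>Bs t. g (measure (measure_pmf p) (cyl t b))) \<le>
     2^t * g (W t / 2^t) + (\<Sum>k\<in>{k. m k < t}. 2^(m k) * g (pmf q k / 2^(m k)))"
proof -
  define x where "x b k = pmf q k * measure (measure_pmf (nu (m k))) (cyl t b)" for b k
  have fin: "finite {k. m k < t}"
  proof (rule finite_subset[of _ "{..<t}"])
    show "{k. m k < t} \<subseteq> {..<t}" using seq_suble[OF sm] by (auto intro: le_less_trans)
  qed simp
  have each: "g (measure (measure_pmf p) (cyl t b)) \<le> g (W t / 2^t) + (\<Sum>k\<in>{k. m k < t}. g (x b k))" for b
  proof -
    have dec: "measure (measure_pmf p) (cyl t b) = W t / 2^t + sum (x b) {k. m k < t}"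
      unfolding W_def x_def by (rule mix_cyl_decomp[OF sm])
    show ?thesis unfolding dec
      by (rule subadd_sum[where e=e, OF sub fin]) 
         (use cyl_le_e[OF assms, of b] dec in \<open>auto simp: x_def W_def\<close>)
  qed
  have "(\<Sum>b\<in>Bs t. g (measure (measure_pmf p) (cyl t b))) \<le> (\<Sum>b\<in>Bs t. g (W t / 2^t) + (\<Sum>k\<in>{k. m k < t}. g (x b k)))"
    by (rule sum_mono[OF each])
  also have "\<dots> = 2^t * g (W t / 2^t) + (\<Sum>k\<in>{k. m k < t}. \<Sum>b\<in>Bs t. g (x b k))"
    by (simp add: sum.distrib card_Bs sum.swap[of _ "Bs t"])
  also have "(\<Sum>k\<in>{k. m k < t}. \<Sum>b\<in>Bs t. g (x b k)) \<le> (\<Sum>k\<in>{k. m k < t}. 2^(m k) * g (pmf q k / 2^(m k)))"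
  proof (rule sum_mono)
    fix k assume "k \<in> {k. m k < t}"
    then show "(\<Sum>b\<in>Bs t. g (x b k)) \<le> 2^(m k) * g (pmf q k / 2^(m k))"
      unfolding x_def by (intro short_family) (auto simp: pmf_le_1)
  qed
  finally show ?thesis by simp
qed

end


lemma G0_props:
  assumes "g \<in> G0_inf"
  shows "concave_on {0..1} g" "g 0 = 0" "(g \<longlongrightarrow> 0) (at_right 0)"
    "filterlim (\<lambda>x. g x / eta x) at_top (at_right 0)"
  using assms by (auto simp: G0_inf_def G0_def)

lemma eta_pos: "0 < x \<Longrightarrow> x < 1 \<Longrightarrow> 0 < eta x"
  by (auto simp: eta_def mult_pos_neg)

lemma g_pos:
  assumes "g \<in> G0_inf"
  shows "\<exists>e0>0. e0 \<le> 1 \<and> (\<forall>x. 0 < x \<longrightarrow> x < e0 \<longrightarrow> 0 < g x)"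
proof -
  have "eventually (\<lambda>x. 1 < g x / eta x) (at_right 0)"
    using G0_props(4)[OF assms] by (simp add: filterlim_at_top_dense)
  then obtain b where b: "b > 0" "\<forall>y>0. y < b \<longrightarrow> 1 < g y / eta y"
    by (auto simp: eventually_at_right_field)
  show ?thesis
  proof (intro exI[of _ "min b 1"] conjI allI impI)
    fix x assume x: "0 < x" "x < min b 1"
    then have "1 < g x / eta x" "0 < eta x" using b eta_pos[of x] by auto
    then show "0 < g x" by (metis less_divide_eq_1_pos less_trans)
  qed (use b in auto)
qed

lemma g_subadd:
  fixes g :: "real \<Rightarrow> real" and x y :: real
  assumes c: "concave_on {0..1} g" and g0: "g 0 = 0"
    and xy: "0 \<le> x" "0 \<le> y" "x + y \<le> 1"
  shows "g (x + y) \<le> g x + g y"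
proof (cases "x + y = 0")
  case True
  then have "x = 0" "y = 0" using xy by auto
  then show ?thesis using g0 by simp
next
  case False
  define s where "s = x + y"
  have s: "0 < s" "s \<le> 1" using xy False by (auto simp: s_def)
  have a: "g x \<ge> (x/s) * g s"
  proof -
    have "g ((1 - x/s) *\<^sub>R 0 + (x/s) *\<^sub>R s) \<ge> (1 - x/s) * g 0 + (x/s) * g s"
      by (rule concave_onD[OF c]) (use s xy in \<open>auto simp: s_def\<close>)
    then show ?thesis using s g0 by simp
  qed
  have b: "g y \<ge> (y/s) * g s"
  proof -
    have "g ((1 - y/s) *\<^sub>R 0 + (y/s) *\<^sub>R s) \<ge> (1 - y/s) * g 0 + (y/s) * g s"
      by (rule concave_onD[OF c]) (use s xy in \<open>auto simp: s_def\<close>)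
    then show ?thesis using s g0 by simp
  qed
  have "x/s + y/s = 1" using s by (simp add: s_def add_divide_distrib[symmetric])
  then have "(x/s) * g s + (y/s) * g s = g s" by (metis distrib_right mult_1)
  then show ?thesis using a b by (simp add: s_def)
qed

lemma g_mono:
  assumes "g \<in> G0_inf"
  shows "\<exists>e1>0. e1 \<le> 1 \<and> (\<forall>x y. 0 \<le> x \<longrightarrow> x \<le> y \<longrightarrow> y \<le> e1 \<longrightarrow> g x \<le> g y)
     \<and> (\<forall>x. 0 < x \<longrightarrow> x \<le> e1 \<longrightarrow> 0 < g x)"
proof -
  note c = G0_props(1)[OF assms] and g0 = G0_props(2)[OF assms] and lim = G0_props(3)[OF assms]
  obtain e0 where e0: "e0 > 0" "e0 \<le> 1" "\<forall>x. 0 < x \<longrightarrow> x < e0 \<longrightarrow> 0 < g x"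
    using g_pos[OF assms] by blast
  define z where "z = e0 / 2"
  have z: "0 < z" "z < e0" "0 < g z" "z \<le> 1" using e0 by (auto simp: z_def)
  have "eventually (\<lambda>x. dist (g x) 0 < g z) (at_right 0)"
    using lim z(3) by (rule tendstoD)
  then obtain d where d: "d > 0" "\<forall>y>0. y < d \<longrightarrow> \<bar>g y\<bar> < g z"
    by (auto simp: eventually_at_right_field)
  define e1 where "e1 = min (d/2) (z/2)"
  have e1: "e1 > 0" "e1 < d" "e1 < z" using d z by (auto simp: e1_def)
  have mono: "g x \<le> g y" if xy: "0 \<le> x" "x \<le> y" "y \<le> e1" for x y
  proof (cases "x = y")
    case True then show ?thesis by simp
  next
    case False
    then have xy': "x < y" using xy by simp
    have "0 < y" using xy xy' by simp
    then have gy: "g y < g z" using d xy e1 by auto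
    define l where "l = (z - y) / (z - x)"
    have l: "0 < l" "l \<le> 1" using xy xy' e1 by (auto simp: l_def)
    have zx: "z - x > 0" using xy' xy e1 by simp
    have lz: "l * (z - x) = z - y" using zx by (simp add: l_def)
    have "(1 - l) * z + l * x = z - l * (z - x)" by (simp add: algebra_simps)
    then have yl: "y = (1 - l) *\<^sub>R z + l *\<^sub>R x" using lz by simp
    have "g ((1 - l) *\<^sub>R z + l *\<^sub>R x) \<ge> (1 - l) * g z + l * g x"
      by (rule concave_onD[OF c]) (use l z xy e1 in auto)
    then have conc: "g y \<ge> (1 - l) * g z + l * g x" using yl by simp
    show "g x \<le> g y"
    proof (rule ccontr)
      assume "\<not> g x \<le> g y"
      then have "l * g x > l * g y" using l by simp
      moreover have "(1 - l) * g z \<ge> (1 - l) * g y" using l gy by (intro mult_left_mono) auto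
      ultimately have "(1 - l) * g z + l * g x > g y" by (simp add: algebra_simps)
      then show False using conc by simp
    qed
  qed
  show ?thesis
    using e1 mono e0 z by (intro exI[of _ e1]) (auto simp: e1_def)
qed

lemma g_doubling:
  assumes G: "g \<in> G0_inf" and diff: "\<forall>x\<in>{0<..<1}. g differentiable (at x)"
    and ls: "Limsup (at_right 0) (\<lambda>x. ereal (x * deriv g x / g x)) < 1"
  shows "\<exists>c e2. 0 < c \<and> c < 1 \<and> 0 < e2 \<and> e2 \<le> 1 \<and>
      (\<forall>y. 0 < y \<longrightarrow> y < e2 \<longrightarrow> g y \<le> 2 powr c * g (y / 2))"
proof -
  obtain e0 where e0: "e0 > 0" "e0 \<le> 1" "\<forall>x. 0 < x \<longrightarrow> x < e0 \<longrightarrow> 0 < g x"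
    using g_pos[OF G] by blast
  obtain c0 where c0: "Limsup (at_right 0) (\<lambda>x. ereal (x * deriv g x / g x)) < ereal c0" "c0 < 1"
  proof -
    obtain z where "Limsup (at_right 0) (\<lambda>x. ereal (x * deriv g x / g x)) < ereal z" "ereal z < 1"
      using ereal_dense2[OF ls] by blast
    then show ?thesis using that by simp
  qed
  define c where "c = max c0 (1/2)"
  have c: "0 < c" "c < 1" using c0 by (auto simp: c_def)
  have "Limsup (at_right 0) (\<lambda>x. ereal (x * deriv g x / g x)) < ereal c"
    using c0(1) by (rule order.strict_trans2) (simp add: c_def)
  then have "eventually (\<lambda>x. ereal (x * deriv g x / g x) < ereal c) (at_right 0)"
    by (rule Limsup_lessD)
  then obtain b where b: "b > 0" "\<forall>y>0. y < b \<longrightarrow> y * deriv g y / g y < c"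
    by (auto simp: eventually_at_right_field)
  define e2 where "e2 = min b e0"
  have key: "g y \<le> 2 powr c * g (y / 2)" if y: "0 < y" "y < e2" for y
  proof -
    define h where "h x = ln (g x) - c * ln x" for x
    have "h (y/2) \<ge> h y"
    proof (rule DERIV_nonpos_imp_nonincreasing[where f=h and a="y/2" and b=y])
      fix x assume x: "y/2 \<le> x" "x \<le> y"
      then have x0: "0 < x" "x < b" "x < e0" "x < 1" using y e0 by (auto simp: e2_def)
      have gx: "0 < g x" using e0 x0 by auto
      have dg: "DERIV g x :> deriv g x"
        using diff x0 by (simp add: DERIV_deriv_iff_real_differentiable)
      have "DERIV h x :> (deriv g x / g x - c / x)"
      proof -
        have d1: "DERIV (\<lambda>x. ln (g x)) x :> 1 / g x * deriv g x"
          by (rule DERIV_chain2[OF DERIV_ln_divide[OF gx] dg])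
        have d2: "DERIV (\<lambda>x. c * ln x) x :> c * (1 / x)"
          by (rule DERIV_cmult[OF DERIV_ln_divide[OF x0(1)]])
        have "DERIV h x :> 1 / g x * deriv g x - c * (1 / x)"
          unfolding h_def by (rule DERIV_diff[OF d1 d2])
        then show ?thesis by (simp add: divide_inverse mult.commute)
      qed
      moreover have "deriv g x / g x - c / x \<le> 0"
      proof -
        have "x * deriv g x / g x < c" using b x0 by auto
        then have "x * (deriv g x / g x) < c" by simp
        then have "deriv g x / g x < c / x" using x0 by (simp add: field_simps)
        then show ?thesis by simp
      qed
      ultimately show "\<exists>z. DERIV h x :> z \<and> z \<le> 0" by blast
    qed (use y in auto)
    then have "ln (g y) \<le> ln (g (y/2)) + c * ln 2"
      using y by (simp add: h_def ln_div algebra_simps)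
    moreover have "0 < g y" "0 < g (y/2)" using y e0 by (auto simp: e2_def)
    ultimately have "g y \<le> exp (ln (g (y/2)) + c * ln 2)" by (metis exp_ln exp_le_cancel_iff)
    then show ?thesis using \<open>0 < g y\<close> \<open>0 < g (y/2)\<close> by (simp add: exp_add powr_def mult.commute)
  qed
  show ?thesis using c b e0 key by (intro exI[of _ c] exI[of _ e2]) (auto simp: e2_def)
qed



locale msetup =
  fixes g :: "real \<Rightarrow> real" and \<gamma> e c :: real and m0 :: nat
  assumes G: "g \<in> G0_inf"
    and diff: "\<forall>x\<in>{0<..<1}. g differentiable (at x)"
    and gam: "\<gamma> > 0"
    and mono_e: "\<And>x y. 0 \<le> x \<Longrightarrow> x \<le> y \<Longrightarrow> y \<le> e \<Longrightarrow> g x \<le> g y"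
    and pos_e: "\<And>x. 0 < x \<Longrightarrow> x \<le> e \<Longrightarrow> 0 < g x"
    and dbl: "\<And>y. 0 < y \<Longrightarrow> y \<le> e \<Longrightarrow> g y \<le> 2 powr c * g (y / 2)"
    and c: "0 < c" "c < 1"
    and e: "0 < e" "e \<le> 1"
    and m0: "0 < m0" "1 / 2^m0 \<le> e"
begin

definition \<rho> :: real where "\<rho> = 2 powr (c - 1)"
lemma rho: "0 < \<rho>" "\<rho> < 1" using c by (auto simp: \<rho>_def powr_less_one)

definition Psi :: "real \<Rightarrow> nat \<Rightarrow> real" where "Psi W t = 2^t * g (W / 2^t)"

lemma g0: "g 0 = 0" using G by (simp add: G0_inf_def G0_def)

lemma small: "0 < W \<Longrightarrow> W \<le> 1 \<Longrightarrow> m0 \<le> t \<Longrightarrow> 0 < W / 2^t \<and> W / 2^t \<le> e"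
proof -
  assume W: "0 < W" "W \<le> 1" and t: "m0 \<le> t"
  have "W / 2^t \<le> 1 / 2^t" using W by (simp add: divide_right_mono)
  also have "\<dots> \<le> 1 / 2^m0" using t by (simp add: frac_le)
  finally show ?thesis using W m0 by simp
qed

lemma Psi_nonneg: "0 < W \<Longrightarrow> W \<le> 1 \<Longrightarrow> m0 \<le> t \<Longrightarrow> 0 \<le> Psi W t"
  using small pos_e unfolding Psi_def by (simp add: less_imp_le)

lemma Psi_step:
  assumes W: "0 < W" "W \<le> 1" and t: "m0 \<le> t"
  shows "Psi W t \<le> \<rho> * Psi W (Suc t)"
proof -
  define y where "y = W / 2^t"
  have y: "0 < y" "y \<le> e" using small[OF W t] by (auto simp: y_def)
  have "Psi W t = 2^t * g y" by (simp add: Psi_def y_def)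
  also have "\<dots> \<le> 2^t * (2 powr c * g (y/2))"
    using dbl[OF y] by (simp)
  also have "2^t * (2 powr c * g (y/2)) = \<rho> * (2^(Suc t) * g (y/2))"
  proof -
    have "2 powr c = 2 powr (c - 1) * 2" by (simp add: powr_diff)
    then show ?thesis by (simp add: \<rho>_def)
  qed
  also have "y / 2 = W / 2^(Suc t)" by (simp add: y_def)
  finally show ?thesis by (simp add: Psi_def)
qed

lemma Psi_iter:
  assumes W: "0 < W" "W \<le> 1" and t: "m0 \<le> t"
  shows "Psi W t \<le> \<rho>^s * Psi W (t + s)"
proof (induction s)
  case 0 then show ?case by simp
next
  case (Suc s)
  have "Psi W (t + s) \<le> \<rho> * Psi W (Suc (t + s))"
    using Psi_step[OF W, of "t+s"] t by simp
  then have "\<rho>^s * Psi W (t + s) \<le> \<rho>^s * (\<rho> * Psi W (Suc (t + s)))"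
    using rho by (intro mult_left_mono) auto
  then show ?case using Suc by (simp add: mult_ac)
qed

lemma big_N:
  assumes c0: "0 < c0" "c0 \<le> 1"
  shows "\<exists>N1. \<forall>N\<ge>N1. \<gamma> * N \<le> Psi c0 N"
proof -
  define K where "K = \<gamma> / (c0 * ln 2)"
  have "eventually (\<lambda>x. K < g x / eta x) (at_right 0)"
    using G by (simp add: G0_inf_def filterlim_at_top_dense)
  then obtain d where d: "d > 0" "\<forall>y>0. y < d \<longrightarrow> K < g y / eta y"
    by (auto simp: eventually_at_right_field)
  have "(\<lambda>N. c0 * (1/2)^N) \<longlonglongrightarrow> c0 * 0"
    by (intro tendsto_intros) simp
  then have "eventually (\<lambda>N. c0 * (1/2)^N < min d 1) sequentially"
    using d by (intro order_tendstoD) auto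
  then obtain N1 where N1: "\<forall>N\<ge>N1. c0 * (1/2)^N < min d 1"
    by (auto simp: eventually_sequentially)
  show ?thesis
  proof (intro exI allI impI)
    fix N assume "N1 \<le> N"
    define x where "x = c0 / 2^N"
    have x: "0 < x" "x < d" "x < 1" using N1 \<open>N1 \<le> N\<close> c0 by (auto simp: x_def power_one_over)
    have ex: "0 < eta x" using eta_pos x by auto
    have "K * eta x < g x" using d x ex by (auto simp: less_divide_eq)
    moreover have "eta x = x * (real N * ln 2 - ln c0)"
      using x c0 by (simp add: eta_def x_def ln_div algebra_simps ln_realpow)
    moreover have "ln c0 \<le> 0" using c0 by simp
    ultimately have "K * (x * (real N * ln 2)) \<le> g x"
    proof -
      assume a: "K * eta x < g x" "eta x = x * (real N * ln 2 - ln c0)" "ln c0 \<le> 0"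
      have "K \<ge> 0" using gam c0 by (simp add: K_def)
      then have "K * (x * (real N * ln 2)) \<le> K * (x * (real N * ln 2 - ln c0))"
        using a(3) x by (intro mult_left_mono) auto
      then show ?thesis using a by simp
    qed
    moreover have "K * (x * (real N * ln 2)) = \<gamma> * real N / 2^N"
      using c0 by (simp add: K_def x_def field_simps)
    ultimately have "\<gamma> * real N / 2^N \<le> g x" by simp
    then show "\<gamma> * real N \<le> Psi c0 N"
      by (simp add: Psi_def x_def field_simps)
  qed
qed

end


context msetup begin

lemma exists_L: "\<exists>L::nat. \<rho>^L * (A + b * real L) \<le> 1"
proof -
  have "(\<lambda>L. A * \<rho>^L + b * (real L * \<rho>^L)) \<longlonglongrightarrow> A * 0 + b * 0"
    using rho by (intro tendsto_intros powser_times_n_limit_0) auto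
  then have "eventually (\<lambda>L. A * \<rho>^L + b * (real L * \<rho>^L) < 1) sequentially"
    by (intro order_tendstoD) auto
  then obtain L where "A * \<rho>^L + b * (real L * \<rho>^L) < 1"
    by (auto simp: eventually_sequentially)
  then show ?thesis by (intro exI[of _ L]) (simp add: algebra_simps)
qed

lemma ivt_W:
  assumes c0: "0 < c0" "c0 \<le> 1" and N: "m0 \<le> N" and big: "\<gamma> * N \<le> Psi c0 N"
  shows "\<exists>W'. 0 < W' \<and> W' \<le> c0 \<and> Psi W' N = \<gamma> * N"
proof -
  have N0: "0 < N" using N m0 by simp
  have lim: "(g \<longlongrightarrow> 0) (at_right 0)" using G by (simp add: G0_inf_def G0_def)
  have pos: "0 < \<gamma> * real N / 2^N" using gam N0 by simp
  have "eventually (\<lambda>x. g x < \<gamma> * real N / 2^N) (at_right 0)"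
    using lim pos by (intro order_tendstoD) auto
  then obtain d where d: "d > 0" "\<forall>y>0. y < d \<longrightarrow> g y < \<gamma> * real N / 2^N"
    by (auto simp: eventually_at_right_field)
  define x where "x = min (d/2) (c0 / 2^N)"
  have x: "0 < x" "x < d" "x \<le> c0 / 2^N" using d c0 unfolding x_def by auto
  define a where "a = x * 2^N"
  have a: "0 < a" "a \<le> c0" using x unfolding a_def by (simp_all add: pos_le_divide_eq)
  have fa: "Psi a N \<le> \<gamma> * N"
  proof -
    have "g x < \<gamma> * real N / 2^N" using d x by auto
    then have "2^N * g x \<le> \<gamma> * real N" by (simp add: pos_less_divide_eq mult.commute less_imp_le)
    moreover have "a / 2^N = x" by (simp add: a_def)
    ultimately show ?thesis by (simp add: Psi_def)
  qed
  have cont: "continuous_on {a..c0} (\<lambda>w. Psi w N)"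
  proof (rule continuous_at_imp_continuous_on, rule ballI)
    fix w assume w: "w \<in> {a..c0}"
    have p: "1 < (2::real)^N" using N0 by (simp add: one_less_power)
    have w1: "0 < w / 2^N" "w / 2^N < 1"
      using a c0 w p by (auto simp: field_simps)
    have "g differentiable (at (w / 2^N))" using diff w1 by simp
    then have c1: "isCont g (w / 2^N)"
      by (rule differentiable_imp_continuous_within)
    have c2: "isCont (\<lambda>w. w / (2::real)^N) w" by (intro continuous_intros) simp
    have "isCont (\<lambda>w. g (w / 2^N)) w"
      using isCont_o2[OF c2 c1] by simp
    then show "isCont (\<lambda>w. Psi w N) w"
      unfolding Psi_def by (intro continuous_intros)
  qed
  obtain W' where "a \<le> W'" "W' \<le> c0" "Psi W' N = \<gamma> * N"
    using IVT'[of "\<lambda>w. Psi w N" a "\<gamma> * N" c0, OF fa big a(2) cont] by blast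
  then show ?thesis using a by (intro exI[of _ W']) auto
qed

definition stepP :: "nat \<Rightarrow> nat \<times> real \<times> real \<Rightarrow> nat \<times> real \<times> real \<Rightarrow> bool" where
  "stepP k s s' \<longleftrightarrow> (case s of (mk, Wk, B) \<Rightarrow> case s' of (N, W', B') \<Rightarrow>
     mk < N \<and> 0 < W' \<and> W' \<le> Wk / 2 \<and> Psi W' N = \<gamma> * N \<and> B' = B + \<gamma> * N \<and>
     (\<exists>L::nat. \<rho>^L * N \<le> 1 \<and> (\<gamma> + \<gamma> * L + B) * (k + 1) + L \<le> N))"

lemma step_exists:
  assumes W: "0 < Wk" "Wk \<le> 1" and B: "0 \<le> B" and mk: "m0 \<le> mk"
  shows "\<exists>s'. stepP k (mk, Wk, B) s'"
proof -
  obtain N1 where N1: "\<forall>N\<ge>N1. \<gamma> * N \<le> Psi (Wk/2) N"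
    using big_N[of "Wk/2"] W by auto
  define A where "A = real N1 + real mk + 2 + (\<gamma> + B) * (k + 1)"
  define b where "b = \<gamma> * (k + 1) + 1"
  obtain L where L: "\<rho>^L * (A + b * real L) \<le> 1" using exists_L by blast
  define X where "X = (\<gamma> + \<gamma> * L + B) * (k + 1) + L"
  have X0: "0 \<le> X" using gam B by (simp add: X_def)
  define N where "N = max (max N1 (mk + 1)) (nat \<lceil>X\<rceil>)"
  have NX: "X \<le> real N" unfolding N_def of_nat_max by linarith
  have NA: "real N \<le> A + b * real L"
  proof -
    have "real (nat \<lceil>X\<rceil>) \<le> X + 1" using X0 by linarith
    moreover have "X + 1 \<le> A + b * real L - real N1 - real mk - 1"
      by (simp add: X_def A_def b_def algebra_simps)
    moreover have "real N \<le> real N1 + real (mk + 1) + real (nat \<lceil>X\<rceil>)"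
      unfolding N_def of_nat_max by linarith
    ultimately show ?thesis by simp
  qed
  have LN: "\<rho>^L * N \<le> 1"
  proof -
    have "\<rho>^L * N \<le> \<rho>^L * (A + b * real L)" using rho NA by (intro mult_left_mono) auto
    then show ?thesis using L by simp
  qed
  have N: "N1 \<le> N" "mk < N" "m0 \<le> N" using mk by (auto simp: N_def)
  obtain W' where W': "0 < W'" "W' \<le> Wk/2" "Psi W' N = \<gamma> * N"
    using ivt_W[of "Wk/2" N] N1 N W by auto
  show ?thesis
    using N W' LN NX unfolding stepP_def X_def
    by (intro exI[of _ "(N, W', B + \<gamma> * N)"]) (auto simp: stepP_def)
qed

end


context msetup begin

definition B0 :: real where "B0 = 2^m0 * g (1 / 2^m0)"

primrec sq :: "nat \<Rightarrow> nat \<times> real \<times> real" where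
  "sq 0 = (m0, 1, B0)"
| "sq (Suc k) = (SOME s'. stepP k (sq k) s')"

definition ms :: "nat \<Rightarrow> nat" where "ms k = fst (sq k)"
definition Ws :: "nat \<Rightarrow> real" where "Ws k = fst (snd (sq k))"
definition Bb :: "nat \<Rightarrow> real" where "Bb k = snd (snd (sq k))"

lemma sq_eq: "sq k = (ms k, Ws k, Bb k)" by (simp add: ms_def Ws_def Bb_def)

lemma B0_nn: "0 \<le> B0"
  using pos_e[of "1/2^m0"] m0 by (simp add: B0_def less_imp_le)

lemma inv: "0 < Ws k \<and> Ws k \<le> 1 \<and> 0 \<le> Bb k \<and> m0 \<le> ms k \<and> stepP k (sq k) (sq (Suc k))"
proof (induction k)
  case 0
  have a: "0 < Ws 0" "Ws 0 \<le> 1" "0 \<le> Bb 0" "m0 \<le> ms 0"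
    using B0_nn by (auto simp: Ws_def Bb_def ms_def)
  have "\<exists>s'. stepP 0 (sq 0) s'" unfolding sq_eq by (rule step_exists) (use a in auto)
  then have "stepP 0 (sq 0) (sq (Suc 0))" by (simp add: someI_ex)
  then show ?case using a by simp
next
  case (Suc k)
  then have st: "stepP k (ms k, Ws k, Bb k) (ms (Suc k), Ws (Suc k), Bb (Suc k))"
    by (simp add: sq_eq[symmetric])
  have a: "0 < Ws (Suc k)" "Ws (Suc k) \<le> 1" "0 \<le> Bb (Suc k)" "m0 \<le> ms (Suc k)"
    using st Suc gam by (auto simp: stepP_def)
  have "\<exists>s'. stepP (Suc k) (sq (Suc k)) s'" unfolding sq_eq by (rule step_exists) (use a in auto)
  then have "stepP (Suc k) (sq (Suc k)) (sq (Suc (Suc k)))" by (simp add: someI_ex)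
  then show ?case using a by simp
qed

lemma st: "stepP k (ms k, Ws k, Bb k) (ms (Suc k), Ws (Suc k), Bb (Suc k))"
  using inv[of k] by (simp add: sq_eq[symmetric])

lemma Ws_pos: "0 < Ws k" and Ws_le1: "Ws k \<le> 1" and Bb_nn: "0 \<le> Bb k" and ms_ge: "m0 \<le> ms k"
  using inv[of k] by auto

lemma ms_Suc: "ms k < ms (Suc k)" using st[of k] by (simp add: stepP_def)
lemma Ws_Suc: "Ws (Suc k) \<le> Ws k / 2" using st[of k] by (simp add: stepP_def)
lemma Psi_ms: "Psi (Ws (Suc k)) (ms (Suc k)) = \<gamma> * ms (Suc k)" using st[of k] by (simp add: stepP_def)
lemma Bb_Suc: "Bb (Suc k) = Bb k + \<gamma> * ms (Suc k)" using st[of k] by (simp add: stepP_def)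
lemma L_ex: "\<exists>L::nat. \<rho>^L * ms (Suc k) \<le> 1 \<and> (\<gamma> + \<gamma> * L + Bb k) * (k + 1) + L \<le> ms (Suc k)"
  using st[of k] by (simp add: stepP_def)

lemma ms_0: "ms 0 = m0" by (simp add: ms_def)
lemma Ws_0: "Ws 0 = 1" by (simp add: Ws_def)
lemma Bb_0: "Bb 0 = B0" by (simp add: Bb_def)

lemma sm_ms: "strict_mono ms" by (rule strict_mono_Suc_iff[THEN iffD2]) (simp add: ms_Suc)

lemma Ws_geom: "Ws k \<le> (1/2)^k"
proof (induction k)
  case 0 then show ?case by (simp add: Ws_0)
next
  case (Suc k) then show ?case using Ws_Suc[of k] by simp
qed

lemma Ws_lim: "Ws \<longlonglongrightarrow> 0"
proof (rule tendsto_sandwich[of "\<lambda>_. 0" _ _ "\<lambda>k. (1/2)^k"])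
  show "\<forall>\<^sub>F n in sequentially. 0 \<le> Ws n" using Ws_pos by (simp add: less_imp_le)
  show "\<forall>\<^sub>F n in sequentially. Ws n \<le> (1/2)^n" using Ws_geom by simp
  show "(\<lambda>k. (1/2::real)^k) \<longlonglongrightarrow> 0" by (rule LIMSEQ_power_zero) simp
qed simp

definition qf :: "nat \<Rightarrow> real" where "qf k = Ws k - Ws (Suc k)"

lemma qf_nn: "0 \<le> qf k"
  using Ws_Suc[of k] Ws_pos[of k] by (simp add: qf_def)

lemma qf_int: "(\<integral>\<^sup>+k. ennreal (qf k) \<partial>count_space UNIV) = 1"
proof -
  have s: "qf sums (Ws 0 - 0)" unfolding qf_def by (rule telescope_sums'[OF Ws_lim])
  have "(\<integral>\<^sup>+k. ennreal (qf k) \<partial>count_space UNIV) = (\<Sum>k. ennreal (qf k))"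
    by (rule nn_integral_count_space_nat)
  also have "\<dots> = ennreal (\<Sum>k. qf k)"
    using s qf_nn by (intro suminf_ennreal2) (auto simp: sums_iff)
  also have "(\<Sum>k. qf k) = 1" using s by (simp add: sums_iff Ws_0)
  finally show ?thesis by simp
qed

definition q :: "nat pmf" where "q = embed_pmf qf"

lemma pmf_q: "pmf q k = qf k"
  unfolding q_def by (rule pmf_embed_pmf[OF qf_nn qf_int])

lemma q_tail: "measure (measure_pmf q) {k. j \<le> k} = Ws j"
proof -
  have "{k. j \<le> k} = UNIV - {..<j}" by auto
  then have "measure (measure_pmf q) {k. j \<le> k} = 1 - measure (measure_pmf q) {..<j}"
    using measure_pmf.prob_compl[of "{..<j}" q] by simp
  also have "measure (measure_pmf q) {..<j} = (\<Sum>i<j. qf i)"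
    by (simp add: measure_measure_pmf_finite pmf_q)
  also have "\<dots> = Ws 0 - Ws j" unfolding qf_def by (rule sum_lessThan_telescope')
  finally show ?thesis by (simp add: Ws_0)
qed

lemma gsetup: "gsetup g e ms"
proof
  show "\<And>x y. 0 \<le> x \<Longrightarrow> x \<le> y \<Longrightarrow> y \<le> e \<Longrightarrow> g x \<le> g y" by (rule mono_e)
  show "g 0 = 0" by (rule g0)
  show "\<And>x y. 0 \<le> x \<Longrightarrow> 0 \<le> y \<Longrightarrow> x + y \<le> e \<Longrightarrow> g (x + y) \<le> g x + g y"
    using G e by (intro g_subadd) (auto simp: G0_inf_def G0_def)
  show "strict_mono ms" by (rule sm_ms)
  show "1 / 2 ^ ms 0 \<le> e" using m0 by (simp add: ms_0)
qed

end



context msetup begin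

definition D :: "nat \<Rightarrow> real" where
  "D t = (\<Sum>b\<in>Bs t. g (measure (measure_pmf (mix ms q)) (cyl t b)))"

lemma W_at_ms: "gsetup.W ms q (ms j) = Ws j"
proof -
  have "{k. ms j \<le> ms k} = {k. j \<le> k}" using sm_ms by (simp add: strict_mono_less_eq)
  then show ?thesis by (simp add: gsetup.W_def[OF gsetup] q_tail)
qed

lemma W_between:
  assumes "ms k < t" "t \<le> ms (Suc k)"
  shows "gsetup.W ms q t = Ws (Suc k)"
proof -
  have "{i. t \<le> ms i} = {i. Suc k \<le> i}"
  proof (intro equalityI subsetI)
    fix i assume "i \<in> {i. t \<le> ms i}"
    then have "ms k < ms i" using assms by simp
    then show "i \<in> {i. Suc k \<le> i}" using sm_ms by (simp add: strict_mono_less)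
  next
    fix i assume "i \<in> {i. Suc k \<le> i}"
    then have "ms (Suc k) \<le> ms i" using sm_ms by (simp add: strict_mono_less_eq)
    then show "i \<in> {i. t \<le> ms i}" using assms by simp
  qed
  then show ?thesis by (simp add: gsetup.W_def[OF gsetup] q_tail)
qed

lemma short_between:
  assumes "ms k < t" "t \<le> ms (Suc k)"
  shows "{i. ms i < t} = {..k}"
proof (intro equalityI subsetI)
  fix i assume "i \<in> {i. ms i < t}"
  then have "ms i < ms (Suc k)" using assms by simp
  then show "i \<in> {..k}" using sm_ms by (simp add: strict_mono_less)
next
  fix i assume "i \<in> {..k}"
  then have "ms i \<le> ms k" using sm_ms by (simp add: strict_mono_less_eq)
  then show "i \<in> {i. ms i < t}" using assms by simp
qed

lemma D_lower: "\<gamma> * ms (Suc k) \<le> D (ms (Suc k))"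
proof -
  have "2^(ms (Suc k)) * g (gsetup.W ms q (ms (Suc k)) / 2^(ms (Suc k))) \<le> D (ms (Suc k))"
    unfolding D_def by (rule gsetup.H_lower[OF gsetup]) (simp add: ms_0 ms_ge)
  then show ?thesis using Psi_ms[of k] by (simp add: W_at_ms Psi_def)
qed

lemma arg_small: "0 \<le> x \<Longrightarrow> x \<le> 1 \<Longrightarrow> m0 \<le> t \<Longrightarrow> x / 2^t \<le> e"
proof -
  assume x: "0 \<le> x" "x \<le> 1" and t: "m0 \<le> t"
  have "x / 2^t \<le> 1 / 2^t" using x by (simp add: divide_right_mono)
  also have "\<dots> \<le> 1 / 2^m0" using t by (simp add: frac_le)
  finally show ?thesis using m0 by simp
qed

lemma sum_phi: "(\<Sum>i\<le>k. 2^(ms i) * g (pmf q i / 2^(ms i))) \<le> Bb k"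
proof (induction k)
  case 0
  have "g (pmf q 0 / 2^m0) \<le> g (1 / 2^m0)"
    using m0 by (intro mono_e) (auto simp: divide_right_mono pmf_le_1)
  then show ?case by (simp add: ms_0 Bb_0 B0_def)
next
  case (Suc k)
  have "pmf q (Suc k) \<le> Ws (Suc k)"
    using Ws_pos[of "Suc (Suc k)"] by (simp add: pmf_q qf_def)
  then have "g (pmf q (Suc k) / 2^(ms (Suc k))) \<le> g (Ws (Suc k) / 2^(ms (Suc k)))"
    using Ws_le1[of "Suc k"] ms_ge[of "Suc k"] Ws_pos[of "Suc k"]
    by (intro mono_e arg_small divide_right_mono) auto
  then have "2^(ms (Suc k)) * g (pmf q (Suc k) / 2^(ms (Suc k))) \<le> 2^(ms (Suc k)) * g (Ws (Suc k) / 2^(ms (Suc k)))"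
    by (rule mult_left_mono) simp
  then have "2^(ms (Suc k)) * g (pmf q (Suc k) / 2^(ms (Suc k))) \<le> \<gamma> * ms (Suc k)"
    using Psi_ms[of k] unfolding Psi_def by linarith
  then show ?case using Suc by (simp add: Bb_Suc)
qed

lemma D_upper:
  assumes "ms k < t" "t \<le> ms (Suc k)"
  shows "D t \<le> Psi (Ws (Suc k)) t + Bb k"
proof -
  have t0: "ms 0 \<le> t" using assms sm_ms ms_0 ms_ge[of k] by simp
  have "D t \<le> 2^t * g (gsetup.W ms q t / 2^t) + (\<Sum>i\<in>{i. ms i < t}. 2^(ms i) * g (pmf q i / 2^(ms i)))"
    unfolding D_def by (rule gsetup.H_upper[OF gsetup t0])
  then show ?thesis using sum_phi[of k]
    by (simp add: W_between[OF assms] short_between[OF assms] Psi_def)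
qed

lemma D_ratio:
  assumes k: "1 \<le> k" and t: "ms k < t" "t \<le> ms (Suc k)"
  shows "D t \<le> (\<gamma> + 1 / k) * t"
proof -
  define N where "N = ms (Suc k)"
  obtain L :: nat where L: "\<rho>^L * N \<le> 1" "(\<gamma> + \<gamma> * L + Bb k) * (k + 1) + L \<le> N"
    using L_ex[of k] by (auto simp: N_def)
  obtain j where j: "k = Suc j" using k by (cases k) auto
  obtain L' :: nat where L': "(\<gamma> + \<gamma> * L' + Bb j) * (j + 1) + L' \<le> ms k"
    using L_ex[of j] j by auto
  have Bk: "Bb k = Bb j + \<gamma> * ms k" using Bb_Suc[of j] j by simp
  have tm0: "m0 \<le> t" using ms_ge[of k] t by simp
  define s where "s = N - t"
  have ts: "t + s = N" using t by (simp add: s_def N_def)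
  have Wp: "0 < Ws (Suc k)" "Ws (Suc k) \<le> 1" using Ws_pos Ws_le1 by auto
  have Psi_le: "Psi (Ws (Suc k)) t \<le> \<rho>^s * (\<gamma> * N)"
    using Psi_iter[OF Wp tm0, of s] ts Psi_ms[of k] by (simp add: N_def)
  have Dt: "D t \<le> Psi (Ws (Suc k)) t + Bb k" using D_upper[OF t] .
  have kpos: "0 < real k" using k by simp
  have tpos: "0 < real t" using t by simp
  show ?thesis
  proof (cases "L \<le> s")
    case True
    have "\<rho>^s \<le> \<rho>^L" using rho True by (intro power_decreasing) auto
    then have "\<rho>^s * (\<gamma> * N) \<le> \<rho>^L * (\<gamma> * N)" using gam by (intro mult_right_mono) auto
    also have "\<dots> = \<gamma> * (\<rho>^L * N)" by simp
    also have "\<dots> \<le> \<gamma>" using L gam by (simp add: mult_left_le)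
    finally have P: "Psi (Ws (Suc k)) t \<le> \<gamma>" using Psi_le by simp
    have "(\<gamma> + Bb j) * k \<le> ms k"
    proof -
      have h1: "(\<gamma> + Bb j) * real (j + 1) \<le> (\<gamma> + \<gamma> * real L' + Bb j) * real (j + 1)"
        using gam by (intro mult_right_mono) (auto intro!: mult_nonneg_nonneg simp: less_imp_le)
      have h2: "(\<gamma> + \<gamma> * real L' + Bb j) * real (j + 1) + real L' \<le> real (ms k)" using L' .
      from h1 h2 have "(\<gamma> + Bb j) * real (j + 1) \<le> real (ms k)" by linarith
      moreover have "real k = real (j+1)" using j by simp
      ultimately show ?thesis by simp
    qed
    then have "\<gamma> + Bb j \<le> t / k" using t kpos by (simp add: pos_le_divide_eq)
    then have "D t \<le> \<gamma> * ms k + t / k" using Dt P Bk by simp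
    also have "\<dots> \<le> \<gamma> * t + t / k" using gam t by simp
    finally show ?thesis by (simp add: algebra_simps)
  next
    case False
    have "\<rho>^s \<le> 1" using rho by (simp add: power_le_one)
    then have "Psi (Ws (Suc k)) t \<le> \<gamma> * N"
    proof -
      have "\<rho>^s * (\<gamma> * N) \<le> \<gamma> * N"
        using \<open>\<rho>^s \<le> 1\<close> gam rho by (intro mult_left_le_one_le) auto
      then show ?thesis using Psi_le by linarith
    qed
    also have "\<gamma> * N = \<gamma> * t + \<gamma> * s"
    proof -
      have "real N = real t + real s" using ts by (metis of_nat_add)
      then show ?thesis by (simp add: distrib_left)
    qed
    also have "\<dots> \<le> \<gamma> * t + \<gamma> * L" using False gam by simp
    finally have P: "Psi (Ws (Suc k)) t \<le> \<gamma> * t + \<gamma> * L" .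
    have "(\<gamma> * L + Bb k) * real (k + 1) \<le> N - real L"
    proof -
      have h1: "(\<gamma> * L + Bb k) * real (k + 1) \<le> (\<gamma> + \<gamma> * L + Bb k) * real (k + 1)"
        using gam by (intro mult_right_mono) (auto simp: less_imp_le)
      have h2: "(\<gamma> + \<gamma> * real L + Bb k) * real (k + 1) + real L \<le> real N" using L(2) .
      from h1 h2 show ?thesis by linarith
    qed
    moreover have "real N - real L \<le> t" using ts False by simp
    ultimately have "(\<gamma> * L + Bb k) * (k + 1) \<le> t" by simp
    then have "\<gamma> * L + Bb k \<le> t / (k + 1)" using kpos by (simp add: pos_le_divide_eq)
    also have "t / (k + 1) \<le> t / k" using kpos tpos by (simp add: frac_le)
    finally have "D t \<le> \<gamma> * t + t / k" using Dt P by simp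
    then show ?thesis by (simp add: algebra_simps)
  qed
qed

end


context msetup begin

lemma find_k:
  assumes "ms K < n"
  shows "\<exists>k. K \<le> k \<and> ms k < n \<and> n \<le> ms (Suc k)"
proof -
  have ex: "\<exists>j. n \<le> ms j" using seq_suble[OF sm_ms, of n] by blast
  define j where "j = (LEAST j. n \<le> ms j)"
  have j1: "n \<le> ms j" unfolding j_def by (rule LeastI_ex[OF ex])
  have j2: "\<And>i. i < j \<Longrightarrow> ms i < n" unfolding j_def using not_less_Least by (metis not_le)
  have "K < j"
  proof (rule ccontr)
    assume "\<not> K < j"
    then have "ms j \<le> ms K" using sm_ms by (simp add: strict_mono_less_eq)
    then show False using j1 assms by simp
  qed
  then obtain k where k: "j = Suc k" by (cases j) auto
  show ?thesis using k j1 j2[of k] \<open>K < j\<close> by (intro exI[of _ k]) auto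
qed

lemma D_eventually:
  assumes "0 < \<eta>"
  shows "eventually (\<lambda>n. D n / real n \<le> \<gamma> + \<eta>) sequentially"
proof -
  obtain K :: nat where K: "1 / \<eta> < K" using reals_Archimedean2 by blast
  have "0 < 1 / \<eta>" using assms by simp
  then have "0 < real K" using K by linarith
  then have K1: "1 \<le> K" by simp
  have Ke: "1 / real K < \<eta>" using K assms K1 by (simp add: divide_less_eq mult.commute)
  show ?thesis unfolding eventually_sequentially
  proof (intro exI[of _ "Suc (ms K)"] allI impI)
    fix n assume n: "Suc (ms K) \<le> n"
    then obtain k where k: "K \<le> k" "ms k < n" "n \<le> ms (Suc k)" using find_k[of K n] by auto
    have k1: "1 \<le> k" using k K1 by simp
    have Dn: "D n \<le> (\<gamma> + 1 / k) * n" using D_ratio[OF k1 k(2,3)] .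
    have "1 / real k \<le> 1 / real K" using k K1 by (simp add: frac_le)
    then have "(\<gamma> + 1 / k) * n \<le> (\<gamma> + \<eta>) * n" using Ke by (intro mult_right_mono) auto
    then have "D n \<le> (\<gamma> + \<eta>) * n" using Dn by simp
    moreover have "0 < real n" using n by simp
    ultimately show "D n / real n \<le> \<gamma> + \<eta>" by (simp add: pos_divide_le_eq)
  qed
qed

lemma limsup_D: "limsup (\<lambda>n. ereal (D n / real n)) = ereal \<gamma>"
proof (rule antisym)
  show "limsup (\<lambda>n. ereal (D n / real n)) \<le> ereal \<gamma>"
  proof (rule ereal_le_epsilon2)
    fix \<eta> :: real assume "0 < \<eta>"
    have "limsup (\<lambda>n. ereal (D n / real n)) \<le> ereal (\<gamma> + \<eta>)"
      by (rule Limsup_bounded) (use D_eventually[OF \<open>0 < \<eta>\<close>] in \<open>auto elim: eventually_mono\<close>)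
    then show "limsup (\<lambda>n. ereal (D n / real n)) \<le> ereal \<gamma> + ereal \<eta>" by simp
  qed
next
  define r where "r k = ms (Suc k)" for k
  have sr: "strict_mono r" unfolding r_def using sm_ms
    by (simp add: strict_mono_Suc_iff ms_Suc)
  have "ereal \<gamma> \<le> limsup ((\<lambda>n. ereal (D n / real n)) \<circ> r)"
  proof (rule le_Limsup)
    show "\<forall>\<^sub>F x in sequentially. ereal \<gamma> \<le> ((\<lambda>n. ereal (D n / real n)) \<circ> r) x"
    proof (rule always_eventually, rule allI)
      fix k
      have "0 < real (ms (Suc k))" using ms_ge[of "Suc k"] m0 by simp
      then have "\<gamma> \<le> D (ms (Suc k)) / real (ms (Suc k))"
        using D_lower[of k] by (simp add: pos_le_divide_eq)
      then show "ereal \<gamma> \<le> ((\<lambda>n. ereal (D n / real n)) \<circ> r) k" by (simp add: r_def)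
    qed
  qed simp
  also have "\<dots> \<le> limsup (\<lambda>n. ereal (D n / real n))" by (rule limsup_subseq_mono[OF sr])
  finally show "ereal \<gamma> \<le> limsup (\<lambda>n. ereal (D n / real n))" .
qed

lemma result:
  "prob_space (measure_pmf (mix ms q)) \<and> mp_automorphism (measure_pmf (mix ms q)) shift \<and>
   finite_meas_partition (measure_pmf (mix ms q)) PP \<and>
   h_g g (measure_pmf (mix ms q)) shift PP = ereal \<gamma>"
proof (intro conjI)
  show "prob_space (measure_pmf (mix ms q))" by (rule prob_space_measure_pmf)
  have "\<And>k. 0 < ms k" using ms_ge m0 by (metis less_le_trans)
  then show "mp_automorphism (measure_pmf (mix ms q)) shift"
    by (intro mp_shift mix_shift)
  show "finite_meas_partition (measure_pmf (mix ms q)) PP" by (rule partition_PP)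
  show "h_g g (measure_pmf (mix ms q)) shift PP = ereal \<gamma>"
    unfolding h_g_def H_cyl using limsup_D by (simp add: D_def)
qed

end


lemma zero_case:
  shows "\<exists>(M :: (int \<Rightarrow> nat) measure) T P.
           prob_space M \<and> mp_automorphism M T \<and> finite_meas_partition M P \<and>
           h_g g M T P = ereal 0"
proof -
  define p :: "(int \<Rightarrow> nat) pmf" where "p = return_pmf (\<lambda>_. 0)"
  have ps: "map_pmf shift p = p" by (simp add: p_def shift_def)
  have ij: "iter_join (measure_pmf p) shift {UNIV} n = {UNIV}" for n
  proof -
    have w: "(\<Inter>i<n. (shift ^^ i) -` ((\<lambda>_. UNIV) i)) \<inter> space (measure_pmf p) = UNIV \<and> (\<forall>i<n. (\<lambda>_. UNIV) i \<in> {UNIV})" by simp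
    show ?thesis unfolding iter_join_def
    proof (intro equalityI subsetI)
      fix S assume "S \<in> {(\<Inter>i<n. (shift ^^ i) -` A i) \<inter> space (measure_pmf p) |A. \<forall>i<n. A i \<in> {UNIV}}"
      then obtain A where S: "S = (\<Inter>i<n. (shift ^^ i) -` A i) \<inter> space (measure_pmf p)"
        and A: "\<forall>i<n. A i \<in> {UNIV}" by blast
      have "\<forall>i<n. (shift ^^ i) -` A i = UNIV" using A by simp
      then have "S = UNIV" unfolding S by simp
      then show "S \<in> {UNIV}" by simp
    next
      fix S assume "S \<in> {UNIV::(int\<Rightarrow>nat) set}"
      then show "S \<in> {(\<Inter>i<n. (shift ^^ i) -` A i) \<inter> space (measure_pmf p) |A. \<forall>i<n. A i \<in> {UNIV}}"
      proof -
        have "S = (\<Inter>i<n. (shift ^^ i) -` ((\<lambda>_. UNIV) i)) \<inter> space (measure_pmf p)"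
          using w \<open>S \<in> {UNIV}\<close> by simp
        then show ?thesis
          by (intro CollectI exI[of _ "\<lambda>_. UNIV"] conjI) simp_all
      qed
    qed
  qed
  have "h_g g (measure_pmf p) shift {UNIV} = limsup (\<lambda>n. ereal (g 1 / real n))"
    unfolding h_g_def H_g_def ij by (simp add: measure_pmf.prob_space)
  also have "\<dots> = ereal 0"
  proof (rule lim_imp_Limsup)
    show "(\<lambda>n. ereal (g 1 / real n)) \<longlonglongrightarrow> ereal 0"
      by (rule tendsto_ereal[OF lim_const_over_n])
  qed simp
  finally have h: "h_g g (measure_pmf p) shift {UNIV} = ereal 0" .
  have part: "finite_meas_partition (measure_pmf p) {UNIV}"
    unfolding finite_meas_partition_def disjoint_def by auto
  show ?thesis
    by (rule exI[of _ "measure_pmf p"], rule exI[of _ shift], rule exI[of _ "{UNIV}"])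
       (intro conjI prob_space_measure_pmf mp_shift[OF ps] part h)
qed

theorem mainTheorem11:
  fixes g :: "real \<Rightarrow> real" and \<gamma> :: real
  assumes "g \<in> G0_inf"
    and "\<forall>x\<in>{0<..<1}. g differentiable (at x)"
    and "Limsup (at_right 0) (\<lambda>x. ereal (x * deriv g x / g x)) < 1"
    and "\<gamma> \<ge> 0"
  shows "\<exists>(M :: (int \<Rightarrow> nat) measure) T P.
           prob_space M \<and> mp_automorphism M T \<and> finite_meas_partition M P \<and>
           h_g g M T P = ereal \<gamma>"
proof (cases "\<gamma> = 0")
  case True
  then show ?thesis using zero_case by simp
next
  case False
  then have gam: "\<gamma> > 0" using assms(4) by simp
  obtain e1 where e1: "e1 > 0" "e1 \<le> 1" "\<forall>x y. 0 \<le> x \<longrightarrow> x \<le> y \<longrightarrow> y \<le> e1 \<longrightarrow> g x \<le> g y"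
    "\<forall>x. 0 < x \<longrightarrow> x \<le> e1 \<longrightarrow> 0 < g x"
    using g_mono[OF assms(1)] by blast
  obtain c e2 where ce: "0 < c" "c < 1" "0 < e2" "e2 \<le> 1"
    "\<forall>y. 0 < y \<longrightarrow> y < e2 \<longrightarrow> g y \<le> 2 powr c * g (y / 2)"
    using g_doubling[OF assms(1,2,3)] by blast
  define e where "e = min e1 (e2/2)"
  have e: "0 < e" "e \<le> 1" "e \<le> e1" "e < e2" using e1 ce by (auto simp: e_def)
  have "(\<lambda>n. (1/2::real)^n) \<longlonglongrightarrow> 0" by (rule LIMSEQ_power_zero) simp
  then have "eventually (\<lambda>n. (1/2::real)^n < e) sequentially"
    using e by (intro order_tendstoD) auto
  then obtain n where n: "(1/2::real)^n < e" by (auto simp: eventually_sequentially)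
  define m0 where "m0 = Suc n"
  have m0: "0 < m0" "1 / 2^m0 \<le> e"
  proof -
    have "1 / (2::real)^m0 \<le> 1 / 2^n" unfolding m0_def by (intro frac_le) auto
    then have "1 / (2::real)^m0 \<le> (1/2)^n" by (simp add: power_one_over)
    then show "1 / 2^m0 \<le> e" using n by simp
  qed (simp add: m0_def)
  interpret msetup g \<gamma> e c m0
  proof
    show "\<And>x y. 0 \<le> x \<Longrightarrow> x \<le> y \<Longrightarrow> y \<le> e \<Longrightarrow> g x \<le> g y" using e1 e by auto
    show "\<And>x. 0 < x \<Longrightarrow> x \<le> e \<Longrightarrow> 0 < g x" using e1 e by auto
    show "\<And>y. 0 < y \<Longrightarrow> y \<le> e \<Longrightarrow> g y \<le> 2 powr c * g (y / 2)" using ce e by auto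
    show "g \<in> G0_inf" by (rule assms(1))
    show "\<forall>x\<in>{0<..<1}. g differentiable (at x)" by (rule assms(2))
    show "\<gamma> > 0" by (rule gam)
    show "0 < c" "c < 1" by (rule ce(1), rule ce(2))
    show "0 < e" "e \<le> 1" by (rule e(1), rule e(2))
    show "0 < m0" "1 / 2^m0 \<le> e" by (rule m0(1), rule m0(2))
  qed
  show ?thesis by (rule exI, rule exI, rule exI, rule result)
qed

end
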